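(* Let $\theta^k\in\mathcal F$ and let $\theta^{k+1}$ be obtained from $\theta^k$ by one iteration of the generalized SMO algorithm (with $\Delta^k>\tau\ge0$). (a) If the block $\alpha$ is selected with pair $(i,j)$, then $\alpha^{k+1}\neq\alpha^k$ and $(i,j)$ is not a violating pair at $\theta^{k+1}$, i.e. it is neither the case that [$i\in I_{up}(\alpha^{k+1})$, $j\in I_{low}(\alpha^{k+1})$ and $\nabla_{\alpha_i}f(\theta^{k+1})<\nabla_{\alpha_j}f(\theta^{k+1})$], nor that [$i\in I_{low}(\alpha^{k+1})$, $j\in I_{up}(\alpha^{k+1})$ and $\nabla_{\alpha_i}f(\theta^{k+1})>\nabla_{\alpha_j}f(\theta^{k+1})$]. The analogous statement holds for the block $\alpha^*$ with pair $(i^*,j^* )$ and index sets $I^*_{up},I^*_{low}$. (b) If the block $\gamma$ is selected with index $u$, then $\nabla_{\gamma_u}f(\theta^{k+1})\ge0$. (c) If the block $\mu$ is selected with index $u$, then $\nabla_{\mu_u}f(\theta^{k+1})=0$.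
   Context: Setup. Let $n,p,k_1,k_2\ge1$, $X\in\mathbb{R}^{n\times p}$ with rows $X_{i:}$, $y\in\mathbb{R}^n$, $C>0$, $\nu\in(0,1]$, $A\in\mathbb{R}^{k_1\times p}$, $b\in\mathbb{R}^{k_1}$, $\Gamma\in\mathbb{R}^{k_2\times p}$, $d\in\mathbb{R}^{k_2}$; $\mathbf e$ is the all-ones vector and $Q=XX^T\in\mathbb{R}^{n\times n}$. Dual variables are $\theta=(\alpha,\alpha^*,\gamma,\mu)\in\mathbb{R}^n\times\mathbb{R}^n\times\mathbb{R}^{k_1}\times\mathbb{R}^{k_2}$. Let $M$ be the $(2n+k_1+k_2)\times p$ matrix with row blocks $X,-X,A,-\Gamma$, $\bar Q=MM^T$, $l=(y,-y,b,-d)$, and $f(\theta)=\frac12\theta^T\bar Q\theta+l^T\theta$; equivalently $f(\theta)=\frac12\|\beta(\theta)\|^2+y^T(\alpha-\alpha^* )+b^T\gamma-d^T\mu$ with $\beta(\theta)=-\sum_{i=1}^n(\alpha_i-\alpha_i^* )X_{i:}-A^T\gamma+\Gamma^T\mu$. The feasible set $\mathcal F$ consists of $\theta$ with $0\le\alpha_i,\alpha_i^*\le C/n$ for all $i$, $\mathbf e^T(\alpha+\alpha^* )\le C\nu$, $\mathbf e^T(\alpha-\alpha^* )=0$, $\gamma_j\ge0$ for all $j$. Generalized SMO algorithm. Assume the rows of $X$ are pairwise distinct and no row of $A$ or $\Gamma$ is zero. Let $I_{up}(\alpha)=\{i:\alpha_i<C/n\}$, $I_{low}(\alpha)=\{i:\alpha_i>0\}$,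 and $I^*_{up},I^*_{low}$ the same sets for $\alpha^*$. Fix $\tau\ge0$ and $\theta^0\in\mathcal F$. At iteration $k$, with all gradients evaluated at $\theta^k$: pick $i\in\arg\min_{I_{up}(\alpha^k)}\nabla_{\alpha_i}f$, $j\in\arg\max_{I_{low}(\alpha^k)}\nabla_{\alpha_j}f$ and set $\Delta_1=\max(\nabla_{\alpha_j}f-\nabla_{\alpha_i}f,0)$ ($\Delta_1=0$ if either set is empty); define $i^*,j^*,\Delta_2$ identically for $\alpha^*$; $\Delta_3=\max(-\min_{s}\nabla_{\gamma_s}f,0)$; $\Delta_4=\max_s|\nabla_{\mu_s}f|$; $\Delta^k=\max(\Delta_1,\Delta_2,\Delta_3,\Delta_4)$. If $\Delta^k\le\tau$ stop; otherwise update the first block (in the order $\alpha,\alpha^*,\gamma,\mu$) whose $\Delta_m$ equals $\Delta^k$, leaving all other coordinates unchanged: Block $\alpha$: $t_q=-\frac{\nabla_{\alpha_i}f-\nabla_{\alpha_j}f}{Q_{ii}+Q_{jj}-2Q_{ij}}$, $I_1=\max(-\alpha_i^k,\alpha_j^k-C/n)$, $I_2=\min(\alpha_j^k,C/n-\alpha_i^k)$, $t^*=\min(\max(I_1,t_q),I_2)$, $\alpha_i^{k+1}=\alpha_i^k+t^*$, $\alpha_j^{k+1}=\alpha_j^k-t^*$. Block $\alpha^*$: the same formulas with $\alpha^*$, $(i^*,j^* )$, $\nabla_{\alpha^*}f$ and the same matrix $Q$. Block $\gamma$: $u\in\arg\min_s\nabla_{\gamma_s}f$, $\gamma_u^{k+1}=\max\big(\gamma_u^k-\nabla_{\gamma_u}f/(AA^T)_{uu},0\big)$.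 Block $\mu$: $u\in\arg\max_s|\nabla_{\mu_s}f|$, $\mu_u^{k+1}=\mu_u^k-\nabla_{\mu_u}f/(\Gamma\Gamma^T)_{uu}$. *)

theory Defs
  imports Complex_Main
begin

text \<open>Problem data. Vectors are functions nat => real indexed by 0..<dim,
  matrices are nat => nat => real indexed by (row, column).\<close>
record svr =
  nS  :: nat
  pS  :: nat
  k1S :: nat
  k2S :: nat
  XS  :: "nat \<Rightarrow> nat \<Rightarrow> real"
  yS  :: "nat \<Rightarrow> real"
  AS  :: "nat \<Rightarrow> nat \<Rightarrow> real"
  bS  :: "nat \<Rightarrow> real"
  GS  :: "nat \<Rightarrow> nat \<Rightarrow> real"
  dS  :: "nat \<Rightarrow> real"
  CS  :: real
  nuS :: real

record dual =
  al  :: "nat \<Rightarrow> real"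
  als :: "nat \<Rightarrow> real"
  gm  :: "nat \<Rightarrow> real"
  mu  :: "nat \<Rightarrow> real"

definition valid_data :: "svr \<Rightarrow> bool" where
  "valid_data P \<longleftrightarrow> nS P \<ge> 1 \<and> pS P \<ge> 1 \<and> k1S P \<ge> 1 \<and> k2S P \<ge> 1 \<and>
     CS P > 0 \<and> 0 < nuS P \<and> nuS P \<le> 1"

definition beta :: "svr \<Rightarrow> dual \<Rightarrow> nat \<Rightarrow> real" where
  "beta P th l = - (\<Sum>i<nS P. (al th i - als th i) * XS P i l)
                 - (\<Sum>j<k1S P. AS P j l * gm th j)
                 + (\<Sum>s<k2S P. GS P s l * mu th s)"

definition fobj :: "svr \<Rightarrow> dual \<Rightarrow> real" where
  "fobj P th = (\<Sum>l<pS P. (beta P th l)\<^sup>2) / 2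
     + (\<Sum>i<nS P. yS P i * (al th i - als th i))
     + (\<Sum>j<k1S P. bS P j * gm th j) - (\<Sum>s<k2S P. dS P s * mu th s)"

definition grad_al :: "svr \<Rightarrow> dual \<Rightarrow> nat \<Rightarrow> real" where
  "grad_al P th i = - (\<Sum>l<pS P. beta P th l * XS P i l) + yS P i"
definition grad_als :: "svr \<Rightarrow> dual \<Rightarrow> nat \<Rightarrow> real" where
  "grad_als P th i = (\<Sum>l<pS P. beta P th l * XS P i l) - yS P i"
definition grad_gm :: "svr \<Rightarrow> dual \<Rightarrow> nat \<Rightarrow> real" where
  "grad_gm P th j = - (\<Sum>l<pS P. beta P th l * AS P j l) + bS P j"
definition grad_mu :: "svr \<Rightarrow> dual \<Rightarrow> nat \<Rightarrow> real" where
  "grad_mu P th s = (\<Sum>l<pS P. beta P th l * GS P s l) - dS P s"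

definition QX :: "svr \<Rightarrow> nat \<Rightarrow> nat \<Rightarrow> real" where
  "QX P i j = (\<Sum>l<pS P. XS P i l * XS P j l)"

definition feasible :: "svr \<Rightarrow> dual \<Rightarrow> bool" where
  "feasible P th \<longleftrightarrow>
     (\<forall>i<nS P. 0 \<le> al th i \<and> al th i \<le> CS P / real (nS P)
              \<and> 0 \<le> als th i \<and> als th i \<le> CS P / real (nS P))
   \<and> (\<Sum>i<nS P. al th i + als th i) \<le> CS P * nuS P
   \<and> (\<Sum>i<nS P. al th i - als th i) = 0
   \<and> (\<forall>j<k1S P. 0 \<le> gm th j)"

definition smo_assumptions :: "svr \<Rightarrow> bool" where
  "smo_assumptions P \<longleftrightarrow>
     (\<forall>i<nS P. \<forall>j<nS P. i \<noteq> j \<longrightarrow> (\<lambda>l. if l < pS P then XS P i l else 0) \<noteq> (\<lambda>l. if l < pS P then XS P j l else 0))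
   \<and> (\<forall>j<k1S P. \<exists>l<pS P. AS P j l \<noteq> 0)
   \<and> (\<forall>s<k2S P. \<exists>l<pS P. GS P s l \<noteq> 0)"

definition I_up :: "svr \<Rightarrow> (nat \<Rightarrow> real) \<Rightarrow> nat set" where
  "I_up P a = {i. i < nS P \<and> a i < CS P / real (nS P)}"
definition I_low :: "svr \<Rightarrow> (nat \<Rightarrow> real) \<Rightarrow> nat set" where
  "I_low P a = {i. i < nS P \<and> a i > 0}"

definition delta_pair :: "svr \<Rightarrow> (nat \<Rightarrow> real) \<Rightarrow> (nat \<Rightarrow> real) \<Rightarrow> real" where
  "delta_pair P a g =
     (if I_up P a = {} \<or> I_low P a = {} then 0
      else max ((MAX j\<in>I_low P a. g j) - (MIN i\<in>I_up P a. g i)) 0)"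

definition delta1 :: "svr \<Rightarrow> dual \<Rightarrow> real" where
  "delta1 P th = delta_pair P (al th) (grad_al P th)"
definition delta2 :: "svr \<Rightarrow> dual \<Rightarrow> real" where
  "delta2 P th = delta_pair P (als th) (grad_als P th)"
definition delta3 :: "svr \<Rightarrow> dual \<Rightarrow> real" where
  "delta3 P th = max (- (MIN s\<in>{..<k1S P}. grad_gm P th s)) 0"
definition delta4 :: "svr \<Rightarrow> dual \<Rightarrow> real" where
  "delta4 P th = (MAX s\<in>{..<k2S P}. \<bar>grad_mu P th s\<bar>)"
definition delta :: "svr \<Rightarrow> dual \<Rightarrow> real" where
  "delta P th = max (max (delta1 P th) (delta2 P th)) (max (delta3 P th) (delta4 P th))"

definition tstar :: "svr \<Rightarrow> (nat \<Rightarrow> real) \<Rightarrow> (nat \<Rightarrow> real) \<Rightarrow> nat \<Rightarrow> nat \<Rightarrow> real" where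
  "tstar P a g i j =
     (let tq = - (g i - g j) / (QX P i i + QX P j j - 2 * QX P i j);
          I1 = max (- a i) (a j - CS P / real (nS P));
          I2 = min (a j) (CS P / real (nS P) - a i)
      in min (max I1 tq) I2)"

definition pair_update :: "svr \<Rightarrow> (nat \<Rightarrow> real) \<Rightarrow> (nat \<Rightarrow> real) \<Rightarrow> nat \<Rightarrow> nat \<Rightarrow> nat \<Rightarrow> real" where
  "pair_update P a g i j =
     (let t = tstar P a g i j in a(i := a i + t, j := a j - t))"

datatype block = BAlpha nat nat | BAlphaS nat nat | BGamma nat | BMu nat

definition pair_selected :: "svr \<Rightarrow> (nat \<Rightarrow> real) \<Rightarrow> (nat \<Rightarrow> real) \<Rightarrow> nat \<Rightarrow> nat \<Rightarrow> bool" where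
  "pair_selected P a g i j \<longleftrightarrow>
     i \<in> I_up P a \<and> (\<forall>i'\<in>I_up P a. g i \<le> g i') \<and>
     j \<in> I_low P a \<and> (\<forall>j'\<in>I_low P a. g j' \<le> g j)"

text \<open>One (non-stopping) iteration of the generalized SMO algorithm from th to th',
  selecting block blk. The argmin/argmax choices are arbitrary (nondeterministic).\<close>
definition smo_step :: "svr \<Rightarrow> real \<Rightarrow> dual \<Rightarrow> dual \<Rightarrow> block \<Rightarrow> bool" where
  "smo_step P tau th th' blk \<longleftrightarrow> delta P th > tau \<and>
     (case blk of
        BAlpha i j \<Rightarrow> delta1 P th = delta P th
          \<and> pair_selected P (al th) (grad_al P th) i j
          \<and> th' = th\<lparr>al := pair_update P (al th) (grad_al P th) i j\<rparr>
      | BAlphaS i j \<Rightarrow> delta1 P th \<noteq> delta P th \<and> delta2 P th = delta P th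
          \<and> pair_selected P (als th) (grad_als P th) i j
          \<and> th' = th\<lparr>als := pair_update P (als th) (grad_als P th) i j\<rparr>
      | BGamma u \<Rightarrow> delta1 P th \<noteq> delta P th \<and> delta2 P th \<noteq> delta P th
          \<and> delta3 P th = delta P th
          \<and> u < k1S P \<and> (\<forall>s<k1S P. grad_gm P th u \<le> grad_gm P th s)
          \<and> th' = th\<lparr>gm := (gm th)(u := max (gm th u - grad_gm P th u
                                   / (\<Sum>l<pS P. (AS P u l)\<^sup>2)) 0)\<rparr>
      | BMu u \<Rightarrow> delta1 P th \<noteq> delta P th \<and> delta2 P th \<noteq> delta P th
          \<and> delta3 P th \<noteq> delta P th \<and> delta4 P th = delta P th
          \<and> u < k2S P \<and> (\<forall>s<k2S P. \<bar>grad_mu P th s\<bar> \<le> \<bar>grad_mu P th u\<bar>)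
          \<and> th' = th\<lparr>mu := (mu th)(u := mu th u - grad_mu P th u
                                   / (\<Sum>l<pS P. (GS P u l)\<^sup>2))\<rparr>)"

definition violating :: "svr \<Rightarrow> (nat \<Rightarrow> real) \<Rightarrow> (nat \<Rightarrow> real) \<Rightarrow> nat \<Rightarrow> nat \<Rightarrow> bool" where
  "violating P a g i j \<longleftrightarrow>
     (i \<in> I_up P a \<and> j \<in> I_low P a \<and> g i < g j) \<or>
     (i \<in> I_low P a \<and> j \<in> I_up P a \<and> g i > g j)"

end

theory Submission
  imports Defs
begin

lemma sum_upd2:
  fixes a c :: "nat \<Rightarrow> real"
  assumes "i \<noteq> j" "i < n" "j < n"
  shows "(\<Sum>k<n. (a(i := a i + t, j := a j - t)) k * c k) = (\<Sum>k<n. a k * c k) + t * c i - t * c j"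
proof -
  have "\<And>k. (a(i := a i + t, j := a j - t)) k * c k
        = a k * c k + ((if k = i then t * c i else 0) - (if k = j then t * c j else 0))"
    using assms by (auto simp: algebra_simps)
  then have "(\<Sum>k<n. (a(i := a i + t, j := a j - t)) k * c k)
     = (\<Sum>k<n. a k * c k) + ((\<Sum>k<n. (if k = i then t * c i else 0)) - (\<Sum>k<n. (if k = j then t * c j else 0)))"
    by (simp add: sum.distrib sum_subtractf)
  also have "\<dots> = (\<Sum>k<n. a k * c k) + t * c i - t * c j"
    using assms by simp
  finally show ?thesis .
qed

lemma sum_upd2':
  fixes a b c :: "nat \<Rightarrow> real"
  assumes "i \<noteq> j" "i < n" "j < n"
  shows "(\<Sum>k<n. ((a(i := a i + t, j := a j - t)) k - b k) * c k) = (\<Sum>k<n. (a k - b k) * c k) + t * c i - t * c j"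
    "(\<Sum>k<n. (b k - (a(i := a i + t, j := a j - t)) k) * c k) = (\<Sum>k<n. (b k - a k) * c k) - t * c i + t * c j"
proof -
  have e1: "(\<Sum>k<n. ((a(i := a i + t, j := a j - t)) k - b k) * c k) = (\<Sum>k<n. (a(i := a i + t, j := a j - t)) k * c k) - (\<Sum>k<n. b k * c k)"
    by (simp add: left_diff_distrib sum_subtractf)
  have e2: "(\<Sum>k<n. (a k - b k) * c k) = (\<Sum>k<n. a k * c k) - (\<Sum>k<n. b k * c k)"
    by (simp add: left_diff_distrib sum_subtractf)
  show "(\<Sum>k<n. ((a(i := a i + t, j := a j - t)) k - b k) * c k) = (\<Sum>k<n. (a k - b k) * c k) + t * c i - t * c j"
    using e1 e2 sum_upd2[OF assms, of a t c] by simp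
  have e3: "(\<Sum>k<n. (b k - (a(i := a i + t, j := a j - t)) k) * c k) = (\<Sum>k<n. b k * c k) - (\<Sum>k<n. (a(i := a i + t, j := a j - t)) k * c k)"
    by (simp add: left_diff_distrib sum_subtractf)
  have e4: "(\<Sum>k<n. (b k - a k) * c k) = (\<Sum>k<n. b k * c k) - (\<Sum>k<n. a k * c k)"
    by (simp add: left_diff_distrib sum_subtractf)
  show "(\<Sum>k<n. (b k - (a(i := a i + t, j := a j - t)) k) * c k) = (\<Sum>k<n. (b k - a k) * c k) - t * c i + t * c j"
    using e3 e4 sum_upd2[OF assms, of a t c] by simp
qed

lemma pair_core:
  fixes a g g' :: "nat \<Rightarrow> real"
  assumes sel: "pair_selected P a g i j"
    and pos: "g i < g j"
    and D: "QX P i i + QX P j j - 2*QX P i j > 0"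
    and t: "t = tstar P a g i j"
    and gi: "g' i = g i + t*(QX P i i - QX P i j)"
    and gj: "g' j = g j + t*(QX P i j - QX P j j)"
    and ij: "i \<noteq> j"
    and ai: "a i \<ge> 0" and aj: "a j \<le> CS P / real (nS P)"
  shows "pair_update P a g i j \<noteq> a \<and> \<not> violating P (pair_update P a g i j) g' i j"
proof -
  define Dd where "Dd = QX P i i + QX P j j - 2*QX P i j"
  define tq where "tq = - (g i - g j) / Dd"
  define I1 where "I1 = max (- a i) (a j - CS P / real (nS P))"
  define I2 where "I2 = min (a j) (CS P / real (nS P) - a i)"
  have Dp: "Dd > 0" using D Dd_def by simp
  have tqp: "tq > 0" using Dp pos unfolding tq_def by (simp add: field_simps)
  have tqD: "tq * Dd = g j - g i" using Dp unfolding tq_def by (simp add: field_simps)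
  have I1n: "I1 \<le> 0" using ai aj unfolding I1_def by simp
  have I2p: "I2 > 0" using sel unfolding I2_def pair_selected_def I_up_def I_low_def by auto
  have tt: "t = min (max I1 tq) I2" using t unfolding tstar_def Let_def tq_def Dd_def I1_def I2_def by simp
  have tpos: "t > 0" and tle: "t \<le> tq" and tcase: "t = tq \<or> t = a j \<or> t = CS P / real (nS P) - a i"
    using tt tqp I1n I2p unfolding I2_def by (auto simp: min_def max_def split: if_splits)
  have pu: "pair_update P a g i j = a(i := a i + t, j := a j - t)"
    unfolding pair_update_def Let_def t by simp
  have ne: "pair_update P a g i j \<noteq> a"
  proof
    assume "pair_update P a g i j = a"
    then have "a i + t = a i" using pu ij by (metis fun_upd_other fun_upd_same)
    then show False using tpos by simp
  qed
  have diff: "g' i - g' j = (t - tq) * Dd"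
    using gi gj tqD unfolding Dd_def by (simp add: algebra_simps)
  have "(t - tq) * Dd \<le> 0" using tle Dp by (simp add: mult_nonpos_nonneg)
  then have le: "g' i \<le> g' j" using diff by linarith
  have nv: "\<not> violating P (pair_update P a g i j) g' i j"
  proof -
    have "g' i = g' j \<or> (a j - t = 0) \<or> (a i + t = CS P / real (nS P))"
      using tcase diff by auto
    then show ?thesis using le pu ij unfolding violating_def I_up_def I_low_def by auto
  qed
  show ?thesis using ne nv by simp
qed



lemma sum_upd1:
  fixes f c :: "nat \<Rightarrow> real"
  assumes "u < n"
  shows "(\<Sum>k<n. c k * (f(u := v)) k) = (\<Sum>k<n. c k * f k) + c u * (v - f u)"
proof -
  have "\<And>k. c k * (f(u := v)) k = c k * f k + (if k = u then c u * (v - f u) else 0)"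
    by (auto simp: algebra_simps)
  then have "(\<Sum>k<n. c k * (f(u := v)) k) = (\<Sum>k<n. c k * f k) + (\<Sum>k<n. (if k = u then c u * (v - f u) else 0))"
    by (simp add: sum.distrib)
  then show ?thesis using assms by simp
qed

lemma QX_sym: "QX P i j = QX P j i"
  unfolding QX_def by (simp add: mult.commute)

lemma beta_al:
  assumes "i \<noteq> j" "i < nS P" "j < nS P"
  shows "beta P (th\<lparr>al := (al th)(i := al th i + t, j := al th j - t)\<rparr>) l = beta P th l - t * (XS P i l - XS P j l)"
  unfolding beta_def using sum_upd2'(1)[OF assms, where a="al th" and t=t and b="als th" and c="\<lambda>k. XS P k l"]
  by (simp add: algebra_simps)

lemma beta_als:
  assumes "i \<noteq> j" "i < nS P" "j < nS P"
  shows "beta P (th\<lparr>als := (als th)(i := als th i + t, j := als th j - t)\<rparr>) l = beta P th l + t * (XS P i l - XS P j l)"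
  unfolding beta_def using sum_upd2'(2)[OF assms, where a="als th" and t=t and b="al th" and c="\<lambda>k. XS P k l"]
  by (simp add: algebra_simps)

lemma grad_al_upd:
  assumes "i \<noteq> j" "i < nS P" "j < nS P"
  shows "grad_al P (th\<lparr>al := (al th)(i := al th i + t, j := al th j - t)\<rparr>) m = grad_al P th m + t * (QX P i m - QX P j m)"
proof -
  have "(\<Sum>l<pS P. (beta P th l - t * (XS P i l - XS P j l)) * XS P m l)
      = (\<Sum>l<pS P. beta P th l * XS P m l) - t * ((\<Sum>l<pS P. XS P i l * XS P m l) - (\<Sum>l<pS P. XS P j l * XS P m l))"
    (is "?L = ?R")
  proof -
    have "?L = (\<Sum>l<pS P. beta P th l * XS P m l - t * (XS P i l * XS P m l - XS P j l * XS P m l))"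
      by (rule sum.cong) (auto simp: algebra_simps)
    also have "\<dots> = ?R" by (simp add: sum_subtractf sum_distrib_left[symmetric])
    finally show ?thesis .
  qed
  then show ?thesis unfolding grad_al_def beta_al[OF assms] QX_def by simp
qed

lemma grad_als_upd:
  assumes "i \<noteq> j" "i < nS P" "j < nS P"
  shows "grad_als P (th\<lparr>als := (als th)(i := als th i + t, j := als th j - t)\<rparr>) m = grad_als P th m + t * (QX P i m - QX P j m)"
proof -
  have "(\<Sum>l<pS P. (beta P th l + t * (XS P i l - XS P j l)) * XS P m l)
      = (\<Sum>l<pS P. beta P th l * XS P m l) + t * ((\<Sum>l<pS P. XS P i l * XS P m l) - (\<Sum>l<pS P. XS P j l * XS P m l))"
    (is "?L = ?R")
  proof -
    have "?L = (\<Sum>l<pS P. beta P th l * XS P m l + t * (XS P i l * XS P m l - XS P j l * XS P m l))"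
      by (rule sum.cong) (auto simp: algebra_simps)
    also have "\<dots> = ?R" by (simp add: sum.distrib sum_subtractf sum_distrib_left[symmetric])
    finally show ?thesis .
  qed
  then show ?thesis unfolding grad_als_def beta_als[OF assms] QX_def by simp
qed

lemma delta_pair_pos:
  assumes sel: "pair_selected P a g i j" and d: "delta_pair P a g > 0"
  shows "g i < g j"
proof -
  have fu: "finite (I_up P a)" and fl: "finite (I_low P a)" unfolding I_up_def I_low_def by auto
  have iu: "i \<in> I_up P a" and jl: "j \<in> I_low P a" using sel unfolding pair_selected_def by auto
  have mx: "(MAX j\<in>I_low P a. g j) = g j"
    using sel fl jl unfolding pair_selected_def by (intro antisym Max.boundedI) auto
  have mn: "(MIN i\<in>I_up P a. g i) = g i"
    using sel fu iu unfolding pair_selected_def by (intro antisym Min.boundedI) auto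
  show ?thesis using d iu jl mx mn unfolding delta_pair_def by (auto split: if_splits)
qed

lemma D_pos:
  assumes "smo_assumptions P" "i < nS P" "j < nS P" "i \<noteq> j"
  shows "QX P i i + QX P j j - 2 * QX P i j > 0"
proof -
  obtain l where l: "l < pS P" "XS P i l \<noteq> XS P j l"
  proof -
    have "(\<lambda>l. if l < pS P then XS P i l else 0) \<noteq> (\<lambda>l. if l < pS P then XS P j l else 0)"
      using assms unfolding smo_assumptions_def by blast
    then obtain l where "(if l < pS P then XS P i l else 0) \<noteq> (if l < pS P then XS P j l else 0)" by blast
    then show ?thesis using that by (auto split: if_splits)
  qed
  have eq: "QX P i i + QX P j j - 2 * QX P i j = (\<Sum>l<pS P. (XS P i l - XS P j l)^2)"
    unfolding QX_def by (simp add: power2_eq_square algebra_simps sum.distrib sum_subtractf sum_distrib_left)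
  have "(XS P i l - XS P j l)^2 \<le> (\<Sum>l<pS P. (XS P i l - XS P j l)^2)"
    using l by (intro member_le_sum) auto
  moreover have "(XS P i l - XS P j l)^2 > 0" using l by simp
  ultimately show ?thesis using eq by linarith
qed

lemma sqpos:
  fixes p :: nat
  assumes "\<exists>l<p. (c l :: real) \<noteq> 0"
  shows "(\<Sum>l<p. (c l)^2) > 0"
proof -
  obtain l where l: "l < p" "c l \<noteq> 0" using assms by blast
  have "(c l)^2 \<le> (\<Sum>l<p. (c l)^2)" using l by (intro member_le_sum[of l "{..<p}" "\<lambda>l. (c l)^2"]) auto
  moreover have "(c l)^2 > 0" using l by simp
  ultimately show ?thesis by linarith
qed

theorem proposition3p1:
  fixes P :: svr and tau :: real and th th' :: dual and blk :: block
  assumes "valid_data P"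
    and "smo_assumptions P"
    and "tau \<ge> 0"
    and "feasible P th"
    and "smo_step P tau th th' blk"
  shows "(case blk of
            BAlpha i j \<Rightarrow> al th' \<noteq> al th
                \<and> \<not> violating P (al th') (grad_al P th') i j
          | BAlphaS i j \<Rightarrow> als th' \<noteq> als th
                \<and> \<not> violating P (als th') (grad_als P th') i j
          | BGamma u \<Rightarrow> grad_gm P th' u \<ge> 0
          | BMu u \<Rightarrow> grad_mu P th' u = 0)"
proof (cases blk)
  case (BAlpha i j)
  have st: "delta1 P th = delta P th" "pair_selected P (al th) (grad_al P th) i j"
    "th' = th\<lparr>al := pair_update P (al th) (grad_al P th) i j\<rparr>" "delta P th > tau"
    using assms(5) BAlpha unfolding smo_step_def by auto
  have lt: "grad_al P th i < grad_al P th j"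
    using delta_pair_pos[OF st(2)] st(1,4) assms(3) unfolding delta1_def by simp
  have ij: "i \<noteq> j" using lt by auto
  have ib: "i < nS P" "j < nS P" using st(2) unfolding pair_selected_def I_up_def I_low_def by auto
  define t where "t = tstar P (al th) (grad_al P th) i j"
  have pu: "pair_update P (al th) (grad_al P th) i j = (al th)(i := al th i + t, j := al th j - t)"
    unfolding pair_update_def Let_def t_def by simp
  have fe: "al th i \<ge> 0" "al th j \<le> CS P / real (nS P)" using assms(4) ib unfolding feasible_def by auto
  have "pair_update P (al th) (grad_al P th) i j \<noteq> al th
        \<and> \<not> violating P (pair_update P (al th) (grad_al P th) i j) (grad_al P th') i j"
    apply (rule pair_core[OF st(2) lt D_pos[OF assms(2) ib ij] t_def _ _ ij fe])
    using grad_al_upd[OF ij ib] st(3) pu QX_sym[of P j i] by auto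
  then show ?thesis using BAlpha st(3) by simp
next
  case (BAlphaS i j)
  have st: "delta2 P th = delta P th" "pair_selected P (als th) (grad_als P th) i j"
    "th' = th\<lparr>als := pair_update P (als th) (grad_als P th) i j\<rparr>" "delta P th > tau"
    using assms(5) BAlphaS unfolding smo_step_def by auto
  have lt: "grad_als P th i < grad_als P th j"
    using delta_pair_pos[OF st(2)] st(1,4) assms(3) unfolding delta2_def by simp
  have ij: "i \<noteq> j" using lt by auto
  have ib: "i < nS P" "j < nS P" using st(2) unfolding pair_selected_def I_up_def I_low_def by auto
  define t where "t = tstar P (als th) (grad_als P th) i j"
  have pu: "pair_update P (als th) (grad_als P th) i j = (als th)(i := als th i + t, j := als th j - t)"
    unfolding pair_update_def Let_def t_def by simp
  have fe: "als th i \<ge> 0" "als th j \<le> CS P / real (nS P)" using assms(4) ib unfolding feasible_def by auto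
  have "pair_update P (als th) (grad_als P th) i j \<noteq> als th
        \<and> \<not> violating P (pair_update P (als th) (grad_als P th) i j) (grad_als P th') i j"
    apply (rule pair_core[OF st(2) lt D_pos[OF assms(2) ib ij] t_def _ _ ij fe])
    using grad_als_upd[OF ij ib] st(3) pu QX_sym[of P j i] by auto
  then show ?thesis using BAlphaS st(3) by simp
next
  case (BGamma u)
  define N where "N = (\<Sum>l<pS P. (AS P u l)\<^sup>2)"
  define v where "v = max (gm th u - grad_gm P th u / N) 0"
  have st: "u < k1S P" "th' = th\<lparr>gm := (gm th)(u := v)\<rparr>"
    using assms(5) BGamma unfolding smo_step_def N_def v_def by auto
  have Np: "N > 0" unfolding N_def using assms(2) st(1) unfolding smo_assumptions_def
    by (intro sqpos) auto
  have b: "beta P th' l = beta P th l - AS P u l * (v - gm th u)" for l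
    unfolding beta_def st(2) using sum_upd1[OF st(1), of "\<lambda>k. AS P k l" "gm th" v] by simp
  have "(\<Sum>l<pS P. (beta P th l - AS P u l * (v - gm th u)) * AS P u l)
      = (\<Sum>l<pS P. beta P th l * AS P u l) - (v - gm th u) * N"
    (is "?L = ?R")
  proof -
    have "?L = (\<Sum>l<pS P. beta P th l * AS P u l - (v - gm th u) * (AS P u l)\<^sup>2)"
      by (rule sum.cong) (auto simp: algebra_simps power2_eq_square)
    also have "\<dots> = ?R" unfolding N_def by (simp add: sum_subtractf sum_distrib_left[symmetric])
    finally show ?thesis .
  qed
  then have g: "grad_gm P th' u = grad_gm P th u + (v - gm th u) * N"
    unfolding grad_gm_def b by simp
  have "grad_gm P th u + (v - gm th u) * N \<ge> 0"
  proof (cases "gm th u - grad_gm P th u / N \<ge> 0")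
    case True
    then have "v = gm th u - grad_gm P th u / N" unfolding v_def by simp
    then show ?thesis using Np by (simp add: field_simps)
  next
    case False
    then have v0: "v = 0" unfolding v_def by simp
    have "gm th u * N < grad_gm P th u" using False Np by (simp add: field_simps)
    then show ?thesis using v0 by (simp add: algebra_simps)
  qed
  then show ?thesis using g BGamma by simp
next
  case (BMu u)
  define N where "N = (\<Sum>l<pS P. (GS P u l)\<^sup>2)"
  define v where "v = mu th u - grad_mu P th u / N"
  have st: "u < k2S P" "th' = th\<lparr>mu := (mu th)(u := v)\<rparr>"
    using assms(5) BMu unfolding smo_step_def N_def v_def by auto
  have Np: "N > 0" unfolding N_def using assms(2) st(1) unfolding smo_assumptions_def
    by (intro sqpos) auto
  have b: "beta P th' l = beta P th l + GS P u l * (v - mu th u)" for l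
    unfolding beta_def st(2) using sum_upd1[OF st(1), of "\<lambda>k. GS P k l" "mu th" v] by simp
  have "(\<Sum>l<pS P. (beta P th l + GS P u l * (v - mu th u)) * GS P u l)
      = (\<Sum>l<pS P. beta P th l * GS P u l) + (v - mu th u) * N"
    (is "?L = ?R")
  proof -
    have "?L = (\<Sum>l<pS P. beta P th l * GS P u l + (v - mu th u) * (GS P u l)\<^sup>2)"
      by (rule sum.cong) (auto simp: algebra_simps power2_eq_square)
    also have "\<dots> = ?R" unfolding N_def by (simp add: sum.distrib sum_distrib_left[symmetric])
    finally show ?thesis .
  qed
  then have g: "grad_mu P th' u = grad_mu P th u + (v - mu th u) * N"
    unfolding grad_mu_def b by simp
  have "grad_mu P th u + (v - mu th u) * N = 0" unfolding v_def using Np by simp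
  then show ?thesis using g BMu by simp
qed

end
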